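(* Let $N\ge2$, $R>0$, let $g:[0,R]\to(0,\infty)$ be smooth, and let $A,B,p,q$ be positive constants with $0<A<B$, all independent of $\epsilon$. For $\epsilon>0$ let $U_\epsilon$ be the unique solution of problem (N* ) described in the context. Then for every $\kappa\in(0,1)$ there is a constant $\widetilde C_{10}>0$ independent of $\epsilon$ such that for all sufficiently small $\epsilon>0$, $$\Big|\int_0^Rs^{N-1}e^{pU_\epsilon(s)}ds-\frac{R^N}{N}\Big|+\Big|\int_0^Rs^{N-1}e^{-qU_\epsilon(s)}ds-\frac{BR^N}{AN}\Big|\le\widetilde C_{10}\,\epsilon^\kappa\log\frac1\epsilon.$$
   Context: Problem (N* ): for $\epsilon>0$, find $U_\epsilon\in C^1([0,R])\cap C^\infty((0,R))$ such that for $r\in(0,R)$ $$\epsilon^2 g(r)\Big[U_\epsilon''(r)+\Big(\frac{N-1}{r}+\frac{g'(r)}{g(r)}\Big)U_\epsilon'(r)\Big]=\frac{R^N}{N}\Big(\frac{Ae^{pU_\epsilon(r)}}{\int_0^R s^{N-1}e^{pU_\epsilon(s)}ds}-\frac{Be^{-qU_\epsilon(r)}}{\int_0^R s^{N-1}e^{-qU_\epsilon(s)}ds}\Big),$$ together with $\int_0^R s^{N-1}U_\epsilon(s)\,ds=0$, $U_\epsilon'(0)=0$ and $U_\epsilon'(R)=\frac{R(A-B)}{\epsilon^2Ng(R)}$; it has a unique solution. *)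

theory Defs
  imports "HOL-Analysis.Analysis"
begin

definition smooth_on :: "real set \<Rightarrow> (real \<Rightarrow> real) \<Rightarrow> bool" where
  "smooth_on S f \<longleftrightarrow> (\<exists>D :: nat \<Rightarrow> real \<Rightarrow> real.
      (\<forall>x\<in>S. D 0 x = f x) \<and>
      (\<forall>k. \<forall>x\<in>S. (D k has_real_derivative D (Suc k) x) (at x within S)))"

definition solves_Nstar ::
  "nat \<Rightarrow> real \<Rightarrow> (real \<Rightarrow> real) \<Rightarrow> real \<Rightarrow> real \<Rightarrow> real \<Rightarrow> real \<Rightarrow> real
     \<Rightarrow> (real \<Rightarrow> real) \<Rightarrow> bool" where
  "solves_Nstar N R g A B p q \<epsilon> U \<longleftrightarrow>
    (\<exists>U1. (\<forall>x\<in>{0..R}. (U has_real_derivative U1 x) (at x within {0..R})) \<and>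
          continuous_on {0..R} U1 \<and>
          U1 0 = 0 \<and>
          U1 R = R * (A - B) / (\<epsilon>\<^sup>2 * real N * g R)) \<and>
    smooth_on {0<..<R} U \<and>
    integral {0..R} (\<lambda>s. s ^ (N - 1) * U s) = 0 \<and>
    (\<forall>r\<in>{0<..<R}.
       \<epsilon>\<^sup>2 * g r * (deriv (deriv U) r + ((real N - 1) / r + deriv g r / g r) * deriv U r)
       = R ^ N / real N *
         (A * exp (p * U r) / integral {0..R} (\<lambda>s. s ^ (N - 1) * exp (p * U s))
          - B * exp (- q * U r) / integral {0..R} (\<lambda>s. s ^ (N - 1) * exp (- q * U s))))"

end

theory Submission
  imports Defs "HOL-Real_Asymp.Real_Asymp"
begin
lemma mvt_real:
  fixes f f' :: "real \<Rightarrow> real"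
  assumes "a < b" "continuous_on {a..b} f"
    "\<And>x. a < x \<Longrightarrow> x < b \<Longrightarrow> (f has_real_derivative f' x) (at x)"
  obtains \<xi> where "a < \<xi>" "\<xi> < b" "f b - f a = f' \<xi> * (b - a)"
proof -
  have "\<And>x. a < x \<Longrightarrow> x < b \<Longrightarrow> (f has_derivative (*) (f' x)) (at x)"
    using assms(3) by (simp add: has_field_derivative_def)
  from mvt[OF assms(1,2) this] obtain \<xi> where "a < \<xi>" "\<xi> < b" "f b - f a = f' \<xi> * (b - a)"
    by blast
  then show ?thesis using that by blast
qed

lemma smooth_deriv1:
  assumes "smooth_on S f"
  shows "\<exists>f1. \<forall>x\<in>S. (f has_real_derivative f1 x) (at x within S)"
proof -
  from assms obtain D where D0: "\<forall>x\<in>S. D 0 x = f x"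
    and Dk: "\<forall>k. \<forall>x\<in>S. (D k has_real_derivative D (Suc k) x) (at x within S)"
    unfolding smooth_on_def by blast
  have "\<forall>x\<in>S. (f has_real_derivative D 1 x) (at x within S)"
  proof
    fix x assume x: "x \<in> S"
    have "(D 0 has_real_derivative D 1 x) (at x within S)" using Dk x by simp
    then show "(f has_real_derivative D 1 x) (at x within S)"
      by (rule has_field_derivative_transform_within[where d=1]) (use x D0 in auto)
  qed
  then show ?thesis by blast
qed

lemma bridge:
  fixes N :: nat and R A B p q \<epsilon> :: real and g g1 U :: "real \<Rightarrow> real"
  assumes "solves_Nstar N R g A B p q \<epsilon> U"
    and g1: "\<forall>x\<in>{0..R}. (g has_real_derivative g1 x) (at x within {0..R})"
  shows "\<exists>U1 U2. (\<forall>x\<in>{0..R}. (U has_real_derivative U1 x) (at x within {0..R})) \<and>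
          continuous_on {0..R} U1 \<and> U1 0 = 0 \<and>
          U1 R = R * (A - B) / (\<epsilon>\<^sup>2 * real N * g R) \<and>
          (\<forall>x\<in>{0<..<R}. (U1 has_real_derivative U2 x) (at x)) \<and>
          integral {0..R} (\<lambda>s. s ^ (N - 1) * U s) = 0 \<and>
          (\<forall>r\<in>{0<..<R}.
             \<epsilon>\<^sup>2 * g r * (U2 r + ((real N - 1) / r + g1 r / g r) * U1 r)
             = R ^ N / real N *
               (A * exp (p * U r) / integral {0..R} (\<lambda>s. s ^ (N - 1) * exp (p * U s))
                - B * exp (- q * U r) / integral {0..R} (\<lambda>s. s ^ (N - 1) * exp (- q * U s))))"
proof -
  note S = assms(1)[unfolded solves_Nstar_def]
  from conjunct1[OF S] obtain U1 where U1: "\<forall>x\<in>{0..R}. (U has_real_derivative U1 x) (at x within {0..R})"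
    "continuous_on {0..R} U1" "U1 0 = 0" "U1 R = R * (A - B) / (\<epsilon>\<^sup>2 * real N * g R)"
    by (elim exE conjE) (rule that; assumption)
  note S2 = conjunct2[OF S]
  note sm = conjunct1[OF S2]
  note mean = conjunct1[OF conjunct2[OF S2]]
  note ode = conjunct2[OF conjunct2[OF S2]]
  from sm obtain D where D0: "\<forall>x\<in>{0<..<R}. D 0 x = U x"
    and Dk: "\<forall>k. \<forall>x\<in>{0<..<R}. (D k has_real_derivative D (Suc k) x) (at x within {0<..<R})"
    unfolding smooth_on_def by blast
  have Dk': "(D k has_real_derivative D (Suc k) x) (at x)" if "x \<in> {0<..<R}" for k x
  proof -
    have "(D k has_real_derivative D (Suc k) x) (at x within {0<..<R})" using Dk that by blast
    then show ?thesis using at_within_open[OF that open_greaterThanLessThan] by simp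
  qed
  have U1at: "(U has_real_derivative U1 x) (at x)" if x: "x \<in> {0<..<R}" for x
  proof -
    have "at x within {0..R} = at x" using x by (intro at_within_Icc_at) auto
    then show ?thesis using U1(1) x by (metis greaterThanLessThan_iff atLeastAtMost_iff less_imp_le)
  qed
  have UD1: "(U has_real_derivative D 1 x) (at x)" if x: "x \<in> {0<..<R}" for x
  proof -
    have "(D 0 has_real_derivative D 1 x) (at x)" using Dk'[OF x, of 0] by simp
    then show ?thesis by (rule has_field_derivative_transform_within_open[where S="{0<..<R}"]) (use x D0 in auto)
  qed
  have U1D1: "U1 x = D 1 x" if x: "x \<in> {0<..<R}" for x
    using DERIV_unique[OF U1at[OF x] UD1[OF x]] .
  have dU: "deriv U x = U1 x" if x: "x \<in> {0<..<R}" for x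
    using DERIV_imp_deriv[OF U1at[OF x]] .
  have U1der: "(U1 has_real_derivative D 2 x) (at x)" if x: "x \<in> {0<..<R}" for x
  proof -
    have "(D 1 has_real_derivative D 2 x) (at x)" using Dk'[OF x, of 1] by (simp add: numeral_2_eq_2)
    then show ?thesis by (rule has_field_derivative_transform_within_open[where S="{0<..<R}"]) (use x U1D1 in auto)
  qed
  have ddU: "deriv (deriv U) x = D 2 x" if x: "x \<in> {0<..<R}" for x
  proof -
    have "(deriv U has_real_derivative D 2 x) (at x)"
      by (rule has_field_derivative_transform_within_open[OF U1der[OF x], where S="{0<..<R}"]) (use x dU in auto)
    then show ?thesis by (rule DERIV_imp_deriv)
  qed
  have dg: "deriv g x = g1 x" if x: "x \<in> {0<..<R}" for x
  proof -
    have "at x within {0..R} = at x" using x by (intro at_within_Icc_at) auto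
    then have "(g has_real_derivative g1 x) (at x)" using g1 x
      by (metis greaterThanLessThan_iff atLeastAtMost_iff less_imp_le)
    then show ?thesis by (rule DERIV_imp_deriv)
  qed
  show ?thesis
    apply (rule exI[of _ U1], rule exI[of _ "D 2"])
    apply (intro conjI)
    using U1 apply blast+
    using U1der apply blast
    using mean apply blast
  proof
    fix r assume r: "r \<in> {0<..<R}"
    show "\<epsilon>\<^sup>2 * g r * (D 2 r + ((real N - 1) / r + g1 r / g r) * U1 r)
             = R ^ N / real N *
               (A * exp (p * U r) / integral {0..R} (\<lambda>s. s ^ (N - 1) * exp (p * U s))
                - B * exp (- q * U r) / integral {0..R} (\<lambda>s. s ^ (N - 1) * exp (- q * U s)))"
      using ode[rule_format, OF r] dU[OF r] ddU[OF r] dg[OF r] by simp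
  qed
qed

lemma int_pow:
  assumes "N \<ge> 1" "R \<ge> 0"
  shows "((\<lambda>s::real. s ^ (N - 1)) has_integral R ^ N / real N) {0..R}"
proof -
  have "((\<lambda>s::real. s ^ (N - 1)) has_integral (R ^ N / real N - 0 ^ N / real N)) {0..R}"
  proof (rule fundamental_theorem_of_calculus)
    show "0 \<le> R" using assms by simp
    fix x :: real assume "x \<in> {0..R}"
    have "((\<lambda>s::real. s ^ N / real N) has_real_derivative (real N * x ^ (N - 1) / real N)) (at x within {0..R})"
      by (auto intro!: derivative_eq_intros)
    then show "((\<lambda>s::real. s ^ N / real N) has_vector_derivative x ^ (N - 1)) (at x within {0..R})"
      using assms by (simp add: has_real_derivative_iff_has_vector_derivative)
  qed
  then show ?thesis using assms by (simp add: power_0_left)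
qed

locale sol =
  fixes N :: nat and R A B p q \<epsilon> gmin gmax :: real and g g1 U U1 U2 :: "real \<Rightarrow> real"
  assumes N2: "N \<ge> 2" and Rpos: "R > 0" and Apos: "0 < A" and AB: "A < B"
    and ppos: "p > 0" and qpos: "q > 0" and eps: "\<epsilon> > 0"
    and gmin: "0 < gmin" and gb: "\<forall>x\<in>{0..R}. gmin \<le> g x \<and> g x \<le> gmax"
    and gder: "\<forall>x\<in>{0..R}. (g has_real_derivative g1 x) (at x within {0..R})"
    and Uder: "\<forall>x\<in>{0..R}. (U has_real_derivative U1 x) (at x within {0..R})"
    and U1cont: "continuous_on {0..R} U1" and U10: "U1 0 = 0"
    and U1R: "U1 R = R * (A - B) / (\<epsilon>\<^sup>2 * real N * g R)"
    and U1der: "\<forall>x\<in>{0<..<R}. (U1 has_real_derivative U2 x) (at x)"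
    and mean: "integral {0..R} (\<lambda>s. s ^ (N - 1) * U s) = 0"
    and ode: "\<forall>r\<in>{0<..<R}.
             \<epsilon>\<^sup>2 * g r * (U2 r + ((real N - 1) / r + g1 r / g r) * U1 r)
             = R ^ N / real N *
               (A * exp (p * U r) / integral {0..R} (\<lambda>s. s ^ (N - 1) * exp (p * U s))
                - B * exp (- q * U r) / integral {0..R} (\<lambda>s. s ^ (N - 1) * exp (- q * U s)))"
begin

definition "K = R ^ N / real N"
definition "Ip = integral {0..R} (\<lambda>s. s ^ (N - 1) * exp (p * U s))"
definition "Iq = integral {0..R} (\<lambda>s. s ^ (N - 1) * exp (- q * U s))"
definition "a = A / Ip"
definition "b = B / Iq"
definition "c = ln (b / a) / (p + q)"
definition "m = a * exp (p * c)"
definition "Z r = - (\<epsilon>\<^sup>2 * r ^ (N - 1) * g r * U1 r)"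
definition "phi r = r ^ (N - 1) * K * (b * exp (- q * U r) - a * exp (p * U r))"

lemma Kpos: "K > 0" using Rpos N2 by (simp add: K_def)

lemma gpos: "x \<in> {0..R} \<Longrightarrow> g x > 0" using gb gmin by force

lemma gcont: "continuous_on {0..R} g"
  using gder by (intro DERIV_continuous_on) blast

lemma Ucont: "continuous_on {0..R} U"
  using Uder by (intro DERIV_continuous_on) blast

lemma gat: "x \<in> {0<..<R} \<Longrightarrow> (g has_real_derivative g1 x) (at x)"
proof -
  assume x: "x \<in> {0<..<R}"
  have "at x within {0..R} = at x" using x by (intro at_within_Icc_at) auto
  then show ?thesis using gder x by (metis greaterThanLessThan_iff atLeastAtMost_iff less_imp_le)
qed

lemma Uat: "x \<in> {0<..<R} \<Longrightarrow> (U has_real_derivative U1 x) (at x)"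
proof -
  assume x: "x \<in> {0<..<R}"
  have "at x within {0..R} = at x" using x by (intro at_within_Icc_at) auto
  then show ?thesis using Uder x by (metis greaterThanLessThan_iff atLeastAtMost_iff less_imp_le)
qed

lemma Zcont: "continuous_on {0..R} Z"
  unfolding Z_def by (intro continuous_intros gcont U1cont)

lemma Z0: "Z 0 = 0" by (simp add: Z_def U10)

lemma ZR: "Z R = K * (B - A)"
proof -
  have gR: "g R > 0" using gpos Rpos by simp
  have "R ^ (N - 1) * R = R ^ N" using N2 power_minus_mult[of N R] by simp
  then show ?thesis using gR eps N2 unfolding Z_def U1R K_def
    by (auto simp: field_simps power2_eq_square)
qed

lemma Ip_eq: "Ip = integral {0..R} (\<lambda>s. s ^ (N - 1) * exp (p * U s))" by (simp add: Ip_def)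

lemma Zder: "r \<in> {0<..<R} \<Longrightarrow> (Z has_real_derivative phi r) (at r)"
proof -
  assume r: "r \<in> {0<..<R}"
  have gr: "g r > 0" using gpos r by simp
  have r0: "r > 0" using r by simp
  have d: "((\<lambda>r. r ^ (N - 1) * g r * U1 r) has_real_derivative
      (real (N - 1) * r ^ (N - 1 - 1) * g r * U1 r + r ^ (N - 1) * g1 r * U1 r + r ^ (N - 1) * g r * U2 r)) (at r)"
    using gat[OF r] U1der r
    by (auto intro!: derivative_eq_intros simp: algebra_simps)
  have d2: "(Z has_real_derivative - (\<epsilon>\<^sup>2 * (real (N - 1) * r ^ (N - 1 - 1) * g r * U1 r + r ^ (N - 1) * g1 r * U1 r + r ^ (N - 1) * g r * U2 r))) (at r)"
    unfolding Z_def using DERIV_minus[OF DERIV_cmult[OF d, of "\<epsilon>\<^sup>2"]] by (simp add: mult.assoc)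
  have pw: "r ^ (N - 1) = r * r ^ (N - 1 - 1)" using N2 power_minus_mult[of "N - 1" r] by (simp add: mult.commute)
  have rn1: "real (N - 1) = real N - 1" using N2 by simp
  have o: "\<epsilon>\<^sup>2 * g r * (U2 r + ((real N - 1) / r + g1 r / g r) * U1 r)
             = K * (a * exp (p * U r) - b * exp (- q * U r))"
  proof -
    have "R ^ N / real N * (A * exp (p * U r) / Ip - B * exp (- q * U r) / Iq)
        = K * (a * exp (p * U r) - b * exp (- q * U r))"
      by (simp add: K_def a_def b_def)
    then show ?thesis using ode[rule_format, OF r] unfolding Ip_def Iq_def by simp
  qed
  have "- (\<epsilon>\<^sup>2 * (real (N - 1) * r ^ (N - 1 - 1) * g r * U1 r + r ^ (N - 1) * g1 r * U1 r + r ^ (N - 1) * g r * U2 r))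
      = (- (r ^ (N - 1))) * (\<epsilon>\<^sup>2 * g r * (U2 r + ((real N - 1) / r + g1 r / g r) * U1 r))"
    using r0 gr unfolding pw rn1 by (simp add: field_simps)
  also have "\<dots> = phi r" unfolding o phi_def by (simp add: algebra_simps)
  finally show ?thesis using d2 by simp
qed

end

context sol begin

lemma int_w_integrable:
  assumes "continuous_on {0..R} f"
  shows "(\<lambda>s. s ^ (N - 1) * f s) integrable_on {0..R}"
  by (rule integrable_continuous_interval) (intro continuous_intros assms)

lemma int_const: "integral {0..R} (\<lambda>s. s ^ (N - 1) * C) = K * C"
proof -
  have "((\<lambda>s. s ^ (N - 1) * C) has_integral (R ^ N / real N) * C) {0..R}"
    using has_integral_mult_left[OF int_pow[of N R]] N2 Rpos by simp
  then show ?thesis unfolding K_def by (rule integral_unique)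
qed

lemma int_le_w:
  assumes "continuous_on {0..R} f" "continuous_on {0..R} h" "\<And>s. s \<in> {0..R} \<Longrightarrow> f s \<le> h s"
  shows "integral {0..R} (\<lambda>s. s ^ (N - 1) * f s) \<le> integral {0..R} (\<lambda>s. s ^ (N - 1) * h s)"
  using assms(3) by (intro integral_le int_w_integrable assms(1,2)) (auto intro: mult_left_mono)

lemma int_pos:
  assumes "continuous_on {0..R} f" "\<And>s. s \<in> {0..R} \<Longrightarrow> f s > 0"
  shows "integral {0..R} (\<lambda>s. s ^ (N - 1) * f s) > 0"
proof -
  obtain x0 where x0: "x0 \<in> {0..R}" "\<And>y. y \<in> {0..R} \<Longrightarrow> f x0 \<le> f y"
    using continuous_attains_inf[OF compact_Icc _ assms(1)] Rpos by auto
  have "integral {0..R} (\<lambda>s. s ^ (N - 1) * f x0) \<le> integral {0..R} (\<lambda>s. s ^ (N - 1) * f s)"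
    using x0 by (intro int_le_w assms(1)) auto
  moreover have "integral {0..R} (\<lambda>s. s ^ (N - 1) * f x0) > 0"
    unfolding int_const using Kpos assms(2)[OF x0(1)] by simp
  ultimately show ?thesis by linarith
qed

lemma Ip_pos: "Ip > 0"
  unfolding Ip_def by (rule int_pos) (auto intro!: continuous_intros Ucont)

lemma Iq_pos: "Iq > 0"
  unfolding Iq_def by (rule int_pos) (auto intro!: continuous_intros Ucont)

lemma a_pos: "a > 0" using Ip_pos Apos by (simp add: a_def)
lemma b_pos: "b > 0" using Iq_pos Apos AB by (simp add: b_def)
lemma m_pos: "m > 0" using a_pos by (simp add: m_def)

lemma b_eq: "b = m * exp (q * c)"
proof -
  have "exp ((p + q) * c) = b / a" unfolding c_def using ppos qpos a_pos b_pos by simp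
  then have "a * exp ((p + q) * c) = b" using a_pos by simp
  then show ?thesis unfolding m_def by (simp add: distrib_right exp_add mult.assoc)
qed

lemma a_eq: "a = m * exp (- (p * c))"
  unfolding m_def by (simp add: mult.assoc exp_minus)

lemma phi_form: "phi r = r ^ (N - 1) * K * m * (exp (q * (c - U r)) - exp (- (p * (c - U r))))"
proof -
  have 1: "b * exp (- q * U r) = m * exp (q * (c - U r))"
    unfolding b_eq by (simp add: mult.assoc exp_add[symmetric] algebra_simps)
  have 2: "a * exp (p * U r) = m * exp (- (p * (c - U r)))"
    unfolding a_eq by (simp add: mult.assoc exp_add[symmetric] algebra_simps)
  show ?thesis unfolding phi_def 1 2 by (simp add: algebra_simps)
qed

lemma U1_Z: "r \<in> {0<..R} \<Longrightarrow> U1 r = - Z r / (\<epsilon>\<^sup>2 * r ^ (N - 1) * g r)"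
proof -
  assume r: "r \<in> {0<..R}"
  then have "g r > 0" using gpos by simp
  then show ?thesis using r eps unfolding Z_def by (simp add: field_simps)
qed

lemma U1R_neg: "U1 R < 0"
proof -
  have "g R > 0" using gpos Rpos by simp
  then have "\<epsilon>\<^sup>2 * real N * g R > 0" using eps N2 by simp
  moreover have "R * (A - B) < 0" using Rpos AB by (simp add: mult_pos_neg)
  ultimately show ?thesis unfolding U1R by (simp add: divide_neg_pos)
qed

lemma U_le_c: "x \<in> {0..R} \<Longrightarrow> U x \<le> c"
proof (rule ccontr)
  assume x: "x \<in> {0..R}" and nx: "\<not> U x \<le> c"
  obtain x0 where x0: "x0 \<in> {0..R}" "\<And>y. y \<in> {0..R} \<Longrightarrow> U y \<le> U x0"
    using continuous_attains_sup[OF compact_Icc _ Ucont] Rpos by auto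
  have Ux0: "U x0 > c" using x0(2)[OF x] nx by simp
  show False
  proof (cases "x0 = R")
    case True
    obtain d where d: "d > 0" "\<And>y. y \<in> {0..R} \<Longrightarrow> dist y R < d \<Longrightarrow> dist (U1 y) (U1 R) < - U1 R"
      using U1cont Rpos U1R_neg unfolding continuous_on_iff
      by (metis atLeastAtMost_iff less_eq_real_def neg_0_less_iff_less)
    define s where "s = max (R - d / 2) (R / 2)"
    have s: "0 \<le> s" "s < R" using d Rpos by (auto simp: s_def)
    obtain \<xi> where xi: "s < \<xi>" "\<xi> < R" "U R - U s = U1 \<xi> * (R - s)"
      using mvt_real[OF s(2) continuous_on_subset[OF Ucont], of U1] s Uat by auto
    have "dist \<xi> R < d" using xi d by (auto simp: s_def dist_real_def)
    then have "dist (U1 \<xi>) (U1 R) < - U1 R" using d(2)[of \<xi>] xi s by auto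
    then have "U1 \<xi> < 0" by (auto simp: dist_real_def)
    then have "U1 \<xi> * (R - s) < 0" using xi s by (simp add: mult_neg_pos)
    then have "U R < U s" using xi by linarith
    then show False using x0(2)[of s] s True by auto
  next
    case False
    then have x0R: "x0 < R" using x0 by simp
    have Zx0: "Z x0 = 0"
    proof (cases "x0 = 0")
      case True then show ?thesis using Z0 by simp
    next
      case False
      then have x0i: "x0 \<in> {0<..<R}" using x0 x0R by auto
      have "U1 x0 = 0"
      proof (rule DERIV_local_max[OF Uat[OF x0i]])
        show "0 < min x0 (R - x0)" using x0i by simp
        show "\<forall>y. \<bar>x0 - y\<bar> < min x0 (R - x0) \<longrightarrow> U y \<le> U x0"
        proof (intro allI impI)
          fix y assume "\<bar>x0 - y\<bar> < min x0 (R - x0)"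
          then have "y \<in> {0..R}" by (auto simp: abs_less_iff)
          then show "U y \<le> U x0" using x0(2) by blast
        qed
      qed
      then show ?thesis by (simp add: Z_def)
    qed
    obtain d where d: "d > 0" "\<And>y. y \<in> {0..R} \<Longrightarrow> dist y x0 < d \<Longrightarrow> dist (U y) (U x0) < U x0 - c"
      using Ucont x0(1) Ux0 unfolding continuous_on_iff by (metis diff_gt_0_iff_gt)
    have Ugt: "U y > c" if "y \<in> {0..R}" "dist y x0 < d" for y
      using d(2)[OF that] by (auto simp: dist_real_def)
    define y1 where "y1 = min (x0 + d / 2) R"
    have y1: "x0 < y1" "y1 \<le> R" using d x0R by (auto simp: y1_def)
    obtain \<xi> where xi: "x0 < \<xi>" "\<xi> < y1" "U y1 - U x0 = U1 \<xi> * (y1 - x0)"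
      using mvt_real[OF y1(1) continuous_on_subset[OF Ucont], of U1] y1 x0 Uat by auto
    obtain \<eta> where eta: "x0 < \<eta>" "\<eta> < \<xi>" "Z \<xi> - Z x0 = phi \<eta> * (\<xi> - x0)"
      using mvt_real[OF xi(1) continuous_on_subset[OF Zcont], of phi] xi y1 x0 Zder by auto
    have eta_in: "\<eta> \<in> {0..R}" "dist \<eta> x0 < d" using eta xi y1 x0 d
      by (auto simp: dist_real_def y1_def)
    have Ueta: "U \<eta> > c" using Ugt[OF eta_in] .
    have e1: "exp (q * (c - U \<eta>)) < 1" using Ueta qpos by (simp add: mult_pos_neg)
    have e2: "exp (- (p * (c - U \<eta>))) > 1" using Ueta ppos by (simp add: mult_pos_neg)
    have "\<eta> ^ (N - 1) * K * m > 0" using eta x0 Kpos m_pos by simp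
    then have "phi \<eta> < 0" unfolding phi_form using e1 e2 by (simp add: mult_pos_neg)
    then have "Z \<xi> < 0" using eta Zx0 by (simp add: mult_neg_pos)
    moreover have "\<xi> \<in> {0<..R}" using xi x0 y1 by auto
    moreover have "\<epsilon>\<^sup>2 * \<xi> ^ (N - 1) * g \<xi> > 0" using eps gpos[of \<xi>] xi x0 y1 by simp
    ultimately have "U1 \<xi> > 0" using U1_Z[of \<xi>]
      by (simp add: divide_neg_pos)
    then have "U1 \<xi> * (y1 - x0) > 0" using xi by simp
    then have "U y1 > U x0" using xi by linarith
    moreover have "y1 \<in> {0..R}" using y1 x0 by auto
    ultimately show False using x0(2)[of y1] by linarith
  qed
qed

end

context sol begin

lemma phi_nonneg: "r \<in> {0<..<R} \<Longrightarrow> phi r \<ge> 0"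
proof -
  assume r: "r \<in> {0<..<R}"
  have v: "c - U r \<ge> 0" using U_le_c[of r] r by simp
  have "exp (q * (c - U r)) \<ge> 1" using v qpos by simp
  moreover have "exp (- (p * (c - U r))) \<le> 1" using v ppos by simp
  ultimately have X: "exp (q * (c - U r)) - exp (- (p * (c - U r))) \<ge> 0" by linarith
  have P: "r ^ (N - 1) * K * m \<ge> 0" using r Kpos m_pos by simp
  show ?thesis unfolding phi_form by (rule mult_nonneg_nonneg[OF P X])
qed

lemma phi_lin: "r \<in> {0<..<R} \<Longrightarrow> phi r \<ge> r ^ (N - 1) * K * m * (q * (c - U r))"
proof -
  assume r: "r \<in> {0<..<R}"
  have v: "c - U r \<ge> 0" using U_le_c[of r] r by simp
  have "exp (q * (c - U r)) \<ge> 1 + q * (c - U r)" by (rule exp_ge_add_one_self)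
  moreover have "exp (- (p * (c - U r))) \<le> 1" using v ppos by simp
  ultimately have X: "q * (c - U r) \<le> exp (q * (c - U r)) - exp (- (p * (c - U r)))" by linarith
  have P: "r ^ (N - 1) * K * m \<ge> 0" using r Kpos m_pos by simp
  show ?thesis unfolding phi_form by (rule mult_left_mono[OF X P])
qed

lemma phi_exp: "r \<in> {0<..<R} \<Longrightarrow> phi r \<ge> r ^ (N - 1) * K * m * (exp (q * (c - U r)) - 1)"
proof -
  assume r: "r \<in> {0<..<R}"
  have v: "c - U r \<ge> 0" using U_le_c[of r] r by simp
  have "exp (- (p * (c - U r))) \<le> 1" using v ppos by simp
  then have X: "exp (q * (c - U r)) - 1 \<le> exp (q * (c - U r)) - exp (- (p * (c - U r)))" by linarith
  have P: "r ^ (N - 1) * K * m \<ge> 0" using r Kpos m_pos by simp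
  show ?thesis unfolding phi_form by (rule mult_left_mono[OF X P])
qed

lemma Z_mono: "0 \<le> x \<Longrightarrow> x \<le> y \<Longrightarrow> y \<le> R \<Longrightarrow> Z x \<le> Z y"
proof -
  assume xy: "0 \<le> x" "x \<le> y" "y \<le> R"
  show "Z x \<le> Z y"
  proof (cases "x = y")
    case False
    then have "x < y" using xy by simp
    then obtain \<xi> where xi: "x < \<xi>" "\<xi> < y" "Z y - Z x = phi \<xi> * (y - x)"
      using mvt_real[OF _ continuous_on_subset[OF Zcont], of x y phi] xy Zder by auto
    have "phi \<xi> \<ge> 0" using phi_nonneg[of \<xi>] xi xy by simp
    then have "phi \<xi> * (y - x) \<ge> 0" using xi by simp
    then show ?thesis using xi by linarith
  qed simp
qed

lemma Z_nonneg: "x \<in> {0..R} \<Longrightarrow> Z x \<ge> 0"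
  using Z_mono[of 0 x] Z0 by simp

lemma Z_le: "x \<in> {0..R} \<Longrightarrow> Z x \<le> K * (B - A)"
  using Z_mono[of x R] ZR by simp

lemma U1_nonpos: "r \<in> {0<..R} \<Longrightarrow> U1 r \<le> 0"
proof -
  assume r: "r \<in> {0<..R}"
  have "\<epsilon>\<^sup>2 * r ^ (N - 1) * g r > 0" using eps gpos[of r] r by simp
  moreover have "Z r \<ge> 0" using Z_nonneg[of r] r by simp
  ultimately show ?thesis using U1_Z[OF r] by simp
qed

lemma U_mono: "0 \<le> x \<Longrightarrow> x \<le> y \<Longrightarrow> y \<le> R \<Longrightarrow> U y \<le> U x"
proof -
  assume xy: "0 \<le> x" "x \<le> y" "y \<le> R"
  show "U y \<le> U x"
  proof (cases "x = y")
    case False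
    then have "x < y" using xy by simp
    then obtain \<xi> where xi: "x < \<xi>" "\<xi> < y" "U y - U x = U1 \<xi> * (y - x)"
      using mvt_real[OF _ continuous_on_subset[OF Ucont], of x y U1] xy Uat by auto
    have "U1 \<xi> \<le> 0" using U1_nonpos[of \<xi>] xi xy by simp
    then have "U1 \<xi> * (y - x) \<le> 0" using xi by (simp add: mult_nonpos_nonneg)
    then show ?thesis using xi by linarith
  qed simp
qed

lemma Ip_le: "Ip \<le> exp (p * c) * K"
proof -
  have "Ip \<le> integral {0..R} (\<lambda>s. s ^ (N - 1) * exp (p * c))"
    unfolding Ip_def using U_le_c ppos
    by (intro int_le_w) (auto intro!: continuous_intros Ucont)
  then show ?thesis unfolding int_const by (simp add: mult.commute)
qed

lemma Km: "K * m \<ge> A"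
proof -
  have "A * exp (p * c) / Ip \<ge> A * exp (p * c) / (exp (p * c) * K)"
    using Ip_le Ip_pos Kpos Apos by (intro divide_left_mono) auto
  then have "A * exp (p * c) / Ip \<ge> A / K" by simp
  then show ?thesis unfolding m_def a_def using Kpos by (simp add: field_simps)
qed

definition "Wmax = R ^ (N - 1) * gmax"
definition "wmin = (R / 2) ^ (N - 1) * gmin"
definition "lam0 = (R / 2) ^ (N - 1) * A * q"

lemma w_bounds: "x \<in> {R/2..R} \<Longrightarrow> wmin \<le> x ^ (N - 1) * g x \<and> x ^ (N - 1) * g x \<le> Wmax \<and> 0 < x ^ (N - 1) * g x"
proof -
  assume x: "x \<in> {R/2..R}"
  have x0: "x \<in> {0..R}" using x Rpos by auto
  have g: "gmin \<le> g x" "g x \<le> gmax" using gb x0 by auto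
  have "(R/2) ^ (N - 1) \<le> x ^ (N - 1)" using x Rpos by (intro power_mono) auto
  moreover have "x ^ (N - 1) \<le> R ^ (N - 1)" using x Rpos by (intro power_mono) auto
  moreover have "x > 0" using x Rpos by simp
  ultimately show ?thesis unfolding Wmax_def wmin_def using g gmin Rpos
    by (auto intro!: mult_mono)
qed

lemma step:
  assumes r: "R / 2 \<le> r1" "r1 < r2" "r2 < r3" "r3 \<le> R"
  shows "lam0 * (c - U r1) * (r2 - r1) * (r3 - r2) \<le> \<epsilon>\<^sup>2 * Wmax * (c - U r3)"
proof -
  have R0: "0 < R / 2" using Rpos by simp
  obtain \<xi> where xi: "r1 < \<xi>" "\<xi> < r2" "Z r2 - Z r1 = phi \<xi> * (r2 - r1)"
    using mvt_real[OF r(2) continuous_on_subset[OF Zcont], of phi] r R0 Zder by auto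
  have xiin: "\<xi> \<in> {0<..<R}" using xi r R0 by auto
  have v1: "0 \<le> c - U r1" using U_le_c[of r1] r R0 by simp
  have h1: "(R/2) ^ (N - 1) \<le> \<xi> ^ (N - 1)" using xi r R0 by (intro power_mono) auto
  have h3: "c - U r1 \<le> c - U \<xi>" using U_mono[of r1 \<xi>] xi r R0 by simp
  have "lam0 * (c - U r1) = ((R/2) ^ (N - 1) * A) * (q * (c - U r1))" unfolding lam0_def by simp
  also have "\<dots> \<le> (\<xi> ^ (N - 1) * (K * m)) * (q * (c - U \<xi>))"
    using h1 Km h3 qpos v1 Apos xiin Kpos m_pos by (intro mult_mono) (auto intro!: mult_nonneg_nonneg)
  also have "\<dots> \<le> phi \<xi>" using phi_lin[OF xiin] by (simp add: mult.assoc)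
  finally have ph: "lam0 * (c - U r1) \<le> phi \<xi>" .
  have "Z r2 \<ge> lam0 * (c - U r1) * (r2 - r1)"
  proof -
    have "lam0 * (c - U r1) * (r2 - r1) \<le> phi \<xi> * (r2 - r1)"
      using ph r by (intro mult_right_mono) auto
    moreover have "Z r1 \<ge> 0" using Z_nonneg[of r1] r R0 by simp
    ultimately show ?thesis using xi by linarith
  qed
  obtain \<eta> where eta: "r2 < \<eta>" "\<eta> < r3" "U r3 - U r2 = U1 \<eta> * (r3 - r2)"
    using mvt_real[OF r(3) continuous_on_subset[OF Ucont], of U1] r R0 Uat by auto
  have etain: "\<eta> \<in> {R/2..R}" using eta r by auto
  have wb: "wmin \<le> \<eta> ^ (N - 1) * g \<eta>" "\<eta> ^ (N - 1) * g \<eta> \<le> Wmax" "0 < \<eta> ^ (N - 1) * g \<eta>"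
    using w_bounds[OF etain] by auto
  have Zeta: "Z r2 \<le> Z \<eta>" using Z_mono[of r2 \<eta>] eta r R0 by simp
  have Zr2: "Z r2 \<ge> 0" using Z_nonneg[of r2] r R0 by simp
  have "U1 \<eta> = - Z \<eta> / (\<epsilon>\<^sup>2 * \<eta> ^ (N - 1) * g \<eta>)" using U1_Z[of \<eta>] etain R0 by simp
  then have "U r2 - U r3 = Z \<eta> / (\<epsilon>\<^sup>2 * (\<eta> ^ (N - 1) * g \<eta>)) * (r3 - r2)"
    using eta by (simp add: mult.assoc)
  moreover have "Z r2 / (\<epsilon>\<^sup>2 * Wmax) \<le> Z \<eta> / (\<epsilon>\<^sup>2 * (\<eta> ^ (N - 1) * g \<eta>))"
    using Zeta Zr2 wb eps by (intro frac_le) auto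
  ultimately have "Z r2 / (\<epsilon>\<^sup>2 * Wmax) * (r3 - r2) \<le> U r2 - U r3"
    using r mult_right_mono[of "Z r2 / (\<epsilon>\<^sup>2 * Wmax)" "Z \<eta> / (\<epsilon>\<^sup>2 * (\<eta> ^ (N - 1) * g \<eta>))" "r3 - r2"]
    by simp
  moreover have "\<epsilon>\<^sup>2 * Wmax > 0" using wb eps by simp
  ultimately have "Z r2 / (\<epsilon>\<^sup>2 * Wmax) * (r3 - r2) * (\<epsilon>\<^sup>2 * Wmax) \<le> (U r2 - U r3) * (\<epsilon>\<^sup>2 * Wmax)"
    by (intro mult_right_mono) auto
  moreover have "Z r2 / (\<epsilon>\<^sup>2 * Wmax) * (r3 - r2) * (\<epsilon>\<^sup>2 * Wmax) = Z r2 * (r3 - r2)"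
  proof -
    have ne: "\<epsilon>\<^sup>2 * Wmax \<noteq> 0" using \<open>\<epsilon>\<^sup>2 * Wmax > 0\<close> by (metis less_irrefl)
    have "Z r2 / (\<epsilon>\<^sup>2 * Wmax) * (r3 - r2) * (\<epsilon>\<^sup>2 * Wmax) = Z r2 / (\<epsilon>\<^sup>2 * Wmax) * (\<epsilon>\<^sup>2 * Wmax) * (r3 - r2)"
      by (simp only: mult.assoc mult.commute[of "r3 - r2"])
    also have "\<dots> = Z r2 * (r3 - r2)" using ne by simp
    finally show ?thesis .
  qed
  ultimately have "Z r2 * (r3 - r2) \<le> \<epsilon>\<^sup>2 * Wmax * (U r2 - U r3)"
    by (simp add: mult.commute)
  also have "\<dots> \<le> \<epsilon>\<^sup>2 * Wmax * (c - U r3)"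
    using U_le_c[of r2] r R0 \<open>\<epsilon>\<^sup>2 * Wmax > 0\<close> by (intro mult_left_mono) auto
  finally have "Z r2 * (r3 - r2) \<le> \<epsilon>\<^sup>2 * Wmax * (c - U r3)" .
  moreover have "lam0 * (c - U r1) * (r2 - r1) * (r3 - r2) \<le> Z r2 * (r3 - r2)"
    using \<open>Z r2 \<ge> lam0 * (c - U r1) * (r2 - r1)\<close> r by (intro mult_right_mono) auto
  ultimately show ?thesis by linarith
qed

end

context sol begin

definition "Mc = K * (B - A) / wmin"
definition "C5 = K * (B - A) * Mc / ((R / 2) ^ (N - 1) * A)"

lemma wmin_pos: "wmin > 0" unfolding wmin_def using Rpos gmin by simp
lemma Mc_pos: "Mc > 0" unfolding Mc_def using Kpos AB wmin_pos by simp
lemma C5_nonneg: "C5 \<ge> 0" unfolding C5_def using Kpos AB Mc_pos Rpos Apos by simp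
lemma Wmax_pos: "Wmax > 0"
proof -
  have "gmin \<le> gmax" using gb Rpos by fastforce
  then show ?thesis unfolding Wmax_def using gmin Rpos by simp
qed

lemma lam0_pos: "lam0 > 0" unfolding lam0_def using Rpos Apos qpos by simp

lemma Vbound:
  assumes small: "\<epsilon>\<^sup>2 / Mc \<le> R / 2"
  shows "exp (q * (c - U R - 1)) \<le> 1 + C5 / \<epsilon>\<^sup>2"
proof -
  define t0 where "t0 = \<epsilon>\<^sup>2 / Mc"
  have t0: "t0 > 0" "t0 \<le> R / 2" using eps Mc_pos small by (auto simp: t0_def)
  define s0 where "s0 = R - t0"
  have s0: "R / 2 \<le> s0" "s0 < R" using t0 by (auto simp: s0_def)
  have near: "U s - U R \<le> 1" if s: "s0 \<le> s" "s \<le> R" for s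
  proof (cases "s = R")
    case False
    then have sR: "s < R" using s by simp
    obtain \<xi> where xi: "s < \<xi>" "\<xi> < R" "U R - U s = U1 \<xi> * (R - s)"
      using mvt_real[OF sR continuous_on_subset[OF Ucont], of U1] s s0 Rpos Uat by auto
    have xiin: "\<xi> \<in> {R/2..R}" using xi s s0 by auto
    have wb: "wmin \<le> \<xi> ^ (N - 1) * g \<xi>" "0 < \<xi> ^ (N - 1) * g \<xi>"
      using w_bounds[OF xiin] by auto
    have Zx: "0 \<le> Z \<xi>" "Z \<xi> \<le> K * (B - A)" using Z_nonneg[of \<xi>] Z_le[of \<xi>] xiin Rpos by auto
    have "U1 \<xi> = - Z \<xi> / (\<epsilon>\<^sup>2 * (\<xi> ^ (N - 1) * g \<xi>))" using U1_Z[of \<xi>] xiin Rpos by (simp add: mult.assoc)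
    then have eq: "U s - U R = Z \<xi> / (\<epsilon>\<^sup>2 * (\<xi> ^ (N - 1) * g \<xi>)) * (R - s)" using xi by simp
    have "Z \<xi> / (\<epsilon>\<^sup>2 * (\<xi> ^ (N - 1) * g \<xi>)) \<le> K * (B - A) / (\<epsilon>\<^sup>2 * wmin)"
      using Zx wb eps wmin_pos by (intro frac_le) (auto intro: mult_left_mono)
    also have "\<dots> = 1 / t0" unfolding t0_def Mc_def using eps by (simp add: field_simps)
    finally have f1: "Z \<xi> / (\<epsilon>\<^sup>2 * (\<xi> ^ (N - 1) * g \<xi>)) \<le> 1 / t0" .
    have f0: "0 \<le> Z \<xi> / (\<epsilon>\<^sup>2 * (\<xi> ^ (N - 1) * g \<xi>))" using Zx wb eps by simp
    have "R - s \<le> t0" using s by (simp add: s0_def)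
    then have "Z \<xi> / (\<epsilon>\<^sup>2 * (\<xi> ^ (N - 1) * g \<xi>)) * (R - s) \<le> 1 / t0 * t0"
      using f0 f1 sR t0 by (intro mult_mono) auto
    then show ?thesis using eq t0 by simp
  qed simp
  obtain \<eta> where eta: "s0 < \<eta>" "\<eta> < R" "Z R - Z s0 = phi \<eta> * (R - s0)"
    using mvt_real[OF s0(2) continuous_on_subset[OF Zcont], of phi] s0 Rpos Zder by auto
  have etain: "\<eta> \<in> {0<..<R}" using eta s0 Rpos by auto
  define E where "E = exp (q * (c - U R - 1))"
  have EE: "E \<le> exp (q * (c - U \<eta>))"
    unfolding E_def using near[of \<eta>] eta qpos by (auto intro: mult_left_mono)
  show ?thesis
  proof (cases "E \<le> 1")
    case True then show ?thesis using C5_nonneg eps unfolding E_def by (smt (verit) divide_nonneg_pos zero_less_power)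
  next
    case False
    have h1: "(R/2) ^ (N - 1) \<le> \<eta> ^ (N - 1)" using eta s0 Rpos by (intro power_mono) auto
    have "(R/2) ^ (N - 1) * A * (E - 1) \<le> \<eta> ^ (N - 1) * (K * m) * (exp (q * (c - U \<eta>)) - 1)"
      using h1 Km EE False Rpos Apos etain Kpos m_pos by (intro mult_mono) auto
    also have "\<dots> \<le> phi \<eta>" using phi_exp[OF etain] by (simp add: mult.assoc)
    finally have "(R/2) ^ (N - 1) * A * (E - 1) * t0 \<le> phi \<eta> * t0"
      using t0 by (intro mult_right_mono) auto
    also have "\<dots> = Z R - Z s0" using eta by (simp add: s0_def)
    also have "\<dots> \<le> K * (B - A)" using ZR Z_nonneg[of s0] s0 Rpos by simp
    finally have ineq: "(R/2) ^ (N - 1) * A * (E - 1) * t0 \<le> K * (B - A)" .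
    have pos: "(R/2) ^ (N - 1) * A * t0 > 0" using Rpos Apos t0 by simp
    have "E - 1 \<le> K * (B - A) / ((R/2) ^ (N - 1) * A * t0)"
      using ineq pos by (simp add: le_divide_eq mult.commute mult.left_commute)
    also have "\<dots> = C5 / \<epsilon>\<^sup>2" unfolding C5_def t0_def using Mc_pos eps Rpos Apos
      by (simp add: field_simps)
    finally show ?thesis unfolding E_def by simp
  qed
qed

lemma iterate:
  assumes L: "L > 0" and k: "R - 2 * real k * L \<ge> R / 2"
  shows "j \<le> k \<Longrightarrow> (lam0 * L\<^sup>2) ^ j * (c - U (R - 2 * real j * L)) \<le> (\<epsilon>\<^sup>2 * Wmax) ^ j * (c - U R)"
proof (induction j)
  case 0 then show ?case by simp
next
  case (Suc j)
  define r1 where "r1 = R - 2 * real (Suc j) * L"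
  have jk: "real (Suc j) \<le> real k" using Suc by simp
  have "2 * real (Suc j) * L \<le> 2 * real k * L" using jk L by simp
  then have r1: "R / 2 \<le> r1" using k by (simp add: r1_def)
  have e3: "r1 + 2 * L = R - 2 * real j * L" by (simp add: r1_def algebra_simps)
  have st: "lam0 * (c - U r1) * (r1 + L - r1) * (r1 + 2 * L - (r1 + L)) \<le> \<epsilon>\<^sup>2 * Wmax * (c - U (r1 + 2 * L))"
    using L r1 e3 by (intro step) (auto simp: r1_def)
  have d1: "r1 + L - r1 = L" and d2: "r1 + 2 * L - (r1 + L) = L" by simp_all
  have st': "lam0 * L\<^sup>2 * (c - U r1) \<le> \<epsilon>\<^sup>2 * Wmax * (c - U (R - 2 * real j * L))"
    using st[unfolded d1, unfolded d2, unfolded e3] by (simp add: power2_eq_square mult_ac)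
  have nn: "(lam0 * L\<^sup>2) ^ j \<ge> 0" using lam0_pos by simp
  have "(lam0 * L\<^sup>2) ^ Suc j * (c - U r1) = (lam0 * L\<^sup>2) ^ j * (lam0 * L\<^sup>2 * (c - U r1))"
    by (simp add: mult_ac)
  also have "\<dots> \<le> (lam0 * L\<^sup>2) ^ j * (\<epsilon>\<^sup>2 * Wmax * (c - U (R - 2 * real j * L)))"
    using st' nn by (rule mult_left_mono)
  also have "\<dots> = \<epsilon>\<^sup>2 * Wmax * ((lam0 * L\<^sup>2) ^ j * (c - U (R - 2 * real j * L)))" by (simp add: mult_ac)
  also have "\<dots> \<le> \<epsilon>\<^sup>2 * Wmax * ((\<epsilon>\<^sup>2 * Wmax) ^ j * (c - U R))"
    using Suc.IH Suc.prems Wmax_pos eps by (intro mult_left_mono) auto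
  also have "\<dots> = (\<epsilon>\<^sup>2 * Wmax) ^ Suc j * (c - U R)" by (simp add: mult_ac)
  finally show ?case unfolding r1_def .
qed

end

lemma int_cmul_real: "integral S (\<lambda>x. (c::real) * f x) = c * integral S (f :: 'a::euclidean_space \<Rightarrow> real)"
  using integral_cmul[of S c f] by simp

context sol begin

lemma Pint: "(\<lambda>s. s ^ (N - 1) * (c - U s)) integrable_on {0..R}"
  by (rule int_w_integrable) (intro continuous_intros Ucont)

lemma P_eq: "integral {0..R} (\<lambda>s. s ^ (N - 1) * (c - U s)) = K * c"
proof -
  have "(\<lambda>s. s ^ (N - 1) * (c - U s)) = (\<lambda>s. s ^ (N - 1) * c - s ^ (N - 1) * U s)"
    by (simp add: algebra_simps)
  then have "integral {0..R} (\<lambda>s. s ^ (N - 1) * (c - U s))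
      = integral {0..R} (\<lambda>s. s ^ (N - 1) * c) - integral {0..R} (\<lambda>s. s ^ (N - 1) * U s)"
    using integral_diff[OF int_w_integrable[of "\<lambda>_. c"] int_w_integrable[OF Ucont]] by simp
  then show ?thesis using mean int_const by simp
qed

lemma P_nonneg: "integral {0..R} (\<lambda>s. s ^ (N - 1) * (c - U s)) \<ge> 0"
  using U_le_c by (intro integral_nonneg Pint) auto

lemma Pbound:
  assumes L: "L > 0" and k: "R - 2 * real k * L \<ge> R / 2"
  shows "integral {0..R} (\<lambda>s. s ^ (N - 1) * (c - U s))
     \<le> R ^ (N - 1) * (c - U R) * (R * (\<epsilon>\<^sup>2 * Wmax / (lam0 * L\<^sup>2)) ^ k + 2 * real k * L)"
proof -
  define rk where "rk = R - 2 * real k * L"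
  define th where "th = \<epsilon>\<^sup>2 * Wmax / (lam0 * L\<^sup>2)"
  define V where "V = c - U R"
  have rk: "R / 2 \<le> rk" "rk \<le> R" using k L by (auto simp: rk_def)
  have V0: "V \<ge> 0" using U_le_c[of R] Rpos by (simp add: V_def)
  have lp: "(lam0 * L\<^sup>2) ^ k > 0" using lam0_pos L by simp
  have it: "(lam0 * L\<^sup>2) ^ k * (c - U rk) \<le> (\<epsilon>\<^sup>2 * Wmax) ^ k * V"
    using iterate[OF L k, of k] by (simp add: rk_def V_def)
  have Qk: "c - U rk \<le> th ^ k * V"
  proof -
    have "c - U rk \<le> (\<epsilon>\<^sup>2 * Wmax) ^ k * V / (lam0 * L\<^sup>2) ^ k"
      using it lp by (simp add: le_divide_eq mult.commute)
    then show ?thesis unfolding th_def by (simp add: power_divide)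
  qed
  have thV: "th ^ k * V \<ge> 0" using V0 eps Wmax_pos lam0_pos L by (simp add: th_def)
  define f where "f = (\<lambda>s. s ^ (N - 1) * (c - U s))"
  have fi: "f integrable_on {0..R}" unfolding f_def by (rule Pint)
  have comb: "integral {0..rk} f + integral {rk..R} f = integral {0..R} f"
    using rk Rpos by (intro Henstock_Kurzweil_Integration.integral_combine fi) auto
  have i1: "integral {0..rk} f \<le> integral {0..rk} (\<lambda>s. R ^ (N - 1) * (th ^ k * V))"
  proof (rule integral_le)
    show "f integrable_on {0..rk}" using rk Rpos by (intro integrable_subinterval_real[OF fi]) auto
    show "(\<lambda>s. R ^ (N - 1) * (th ^ k * V)) integrable_on {0..rk}" by (intro integrable_continuous_interval continuous_on_const)
    fix s assume s: "s \<in> {0..rk}"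
    have a1: "0 \<le> c - U s" using U_le_c[of s] s rk by auto
    have a2: "c - U s \<le> c - U rk" using U_mono[of s rk] s rk by auto
    have a3: "s ^ (N - 1) \<le> R ^ (N - 1)" using s rk by (intro power_mono) auto
    show "f s \<le> R ^ (N - 1) * (th ^ k * V)" unfolding f_def
      using a1 a2 a3 Qk s Rpos by (intro mult_mono) auto
  qed
  have i2: "integral {rk..R} f \<le> integral {rk..R} (\<lambda>s. R ^ (N - 1) * V)"
  proof (rule integral_le)
    show "f integrable_on {rk..R}" using rk Rpos by (intro integrable_subinterval_real[OF fi]) auto
    show "(\<lambda>s. R ^ (N - 1) * V) integrable_on {rk..R}" by (intro integrable_continuous_interval continuous_on_const)
    fix s assume s: "s \<in> {rk..R}"
    have a1: "0 \<le> c - U s" using U_le_c[of s] s rk Rpos by auto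
    have a2: "c - U s \<le> V" using U_mono[of s R] s rk Rpos by (auto simp: V_def)
    have a3: "s ^ (N - 1) \<le> R ^ (N - 1)" using s rk Rpos by (intro power_mono) auto
    show "f s \<le> R ^ (N - 1) * V" unfolding f_def
      using a1 a2 a3 s rk Rpos by (intro mult_mono) auto
  qed
  have e1: "integral {0..rk} (\<lambda>s. R ^ (N - 1) * (th ^ k * V)) = rk * (R ^ (N - 1) * (th ^ k * V))"
    using rk Rpos by simp
  have e2: "integral {rk..R} (\<lambda>s. R ^ (N - 1) * V) = (R - rk) * (R ^ (N - 1) * V)"
    using rk by simp
  have "rk * (R ^ (N - 1) * (th ^ k * V)) \<le> R * (R ^ (N - 1) * (th ^ k * V))"
    using rk thV Rpos by (intro mult_right_mono) auto
  then have "integral {0..R} f \<le> R * (R ^ (N - 1) * (th ^ k * V)) + (R - rk) * (R ^ (N - 1) * V)"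
    using comb i1 i2 e1 e2 by linarith
  also have "\<dots> = R ^ (N - 1) * V * (R * th ^ k + 2 * real k * L)"
    by (simp add: rk_def algebra_simps)
  finally show ?thesis unfolding f_def th_def V_def .
qed

end

context sol begin

lemma exp_small: "0 \<le> x \<Longrightarrow> x \<le> 1 \<Longrightarrow> exp x \<le> 1 + 3 * (x::real)"
proof -
  assume x: "0 \<le> x" "x \<le> 1"
  have "exp (- x) \<ge> 1 + (- x)" by (rule exp_ge_add_one_self)
  then have "exp (- x) * exp x \<ge> (1 - x) * exp x" by (intro mult_right_mono) auto
  then have "1 \<ge> exp x - x * exp x" by (simp add: exp_minus algebra_simps)
  moreover have "exp x \<le> 3" using exp_le exp_mono[of x 1] x by linarith
  moreover have "x * exp x \<le> x * 3" using x \<open>exp x \<le> 3\<close> by (intro mult_left_mono) auto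
  ultimately show ?thesis by linarith
qed

lemma est:
  assumes c0: "0 \<le> c" and pc: "p * c \<le> 1"
  shows "\<bar>Ip - K\<bar> + \<bar>Iq - B * K / A\<bar> \<le> (3 * p + B / A * (6 * p + 3 * q)) * (K * c)"
proof -
  define P where "P = K * c"
  have P0: "P \<ge> 0" using c0 Kpos by (simp add: P_def)
  have pP: "p * P \<le> K" using pc Kpos by (simp add: P_def mult.left_commute)
  have fe: "(\<lambda>s. s ^ (N - 1) * (exp (p * c) * (1 - p * (c - U s))))
      = (\<lambda>s. s ^ (N - 1) * exp (p * c) - (exp (p * c) * p) * (s ^ (N - 1) * (c - U s)))"
    by (auto simp: algebra_simps)
  have "integral {0..R} (\<lambda>s. s ^ (N - 1) * (exp (p * c) * (1 - p * (c - U s))))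
      = K * exp (p * c) - exp (p * c) * p * (K * c)"
    unfolding fe
    using integral_diff[OF int_w_integrable[of "\<lambda>_. exp (p * c)"], of "\<lambda>s. (exp (p * c) * p) * (s ^ (N - 1) * (c - U s))"]
      integrable_on_cmult_left[OF Pint, of "exp (p * c) * p"] int_const[of 1] P_eq
    by (simp add: int_cmul_real)
  moreover have "integral {0..R} (\<lambda>s. s ^ (N - 1) * (exp (p * c) * (1 - p * (c - U s)))) \<le> Ip"
    unfolding Ip_def
  proof (rule int_le_w)
    show "continuous_on {0..R} (\<lambda>s. exp (p * c) * (1 - p * (c - U s)))"
      by (intro continuous_intros Ucont)
    show "continuous_on {0..R} (\<lambda>s. exp (p * U s))" by (intro continuous_intros Ucont)
    fix s
    have "exp (- (p * (c - U s))) \<ge> 1 + (- (p * (c - U s)))" by (rule exp_ge_add_one_self)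
    then have "exp (p * c) * (1 - p * (c - U s)) \<le> exp (p * c) * exp (- (p * (c - U s)))"
      by (intro mult_left_mono) auto
    also have "\<dots> = exp (p * U s)" by (simp add: exp_add[symmetric] algebra_simps)
    finally show "exp (p * c) * (1 - p * (c - U s)) \<le> exp (p * U s)" .
  qed
  ultimately have Ilo: "exp (p * c) * (K - p * P) \<le> Ip" by (simp add: P_def algebra_simps)
  have Iup: "Ip \<le> exp (p * c) * K" by (rule Ip_le)
  have ex: "exp (p * c) \<le> 1 + 3 * (p * c)" using exp_small[of "p * c"] c0 ppos pc by simp
  have ex1: "exp (p * c) \<ge> 1" using c0 ppos by simp
  have d1: "Ip - K \<le> 3 * p * P"
  proof -
    have "Ip - K \<le> (exp (p * c) - 1) * K" using Iup by (simp add: algebra_simps)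
    also have "\<dots> \<le> (3 * (p * c)) * K" using ex Kpos by (intro mult_right_mono) auto
    finally show ?thesis by (simp add: P_def mult_ac)
  qed
  have d2: "Ip - K \<ge> - (p * P)"
  proof -
    have "K - p * P \<le> exp (p * c) * (K - p * P)"
      using ex1 pP by (simp add: mult_le_cancel_right1)
    then show ?thesis using Ilo by linarith
  qed
  have absI: "\<bar>Ip - K\<bar> \<le> 3 * p * P" using d1 d2 P0 ppos by (simp add: abs_le_iff) 
  have Ip3: "Ip \<le> 3 * K"
  proof -
    have "exp (p * c) \<le> 3" using exp_le exp_mono[of "p * c" 1] pc by linarith
    then have "exp (p * c) * K \<le> 3 * K" using Kpos by (intro mult_right_mono) auto
    then show ?thesis using Iup by linarith
  qed
  define y where "y = exp (- ((p + q) * c))"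
  have y1: "y \<le> 1" using c0 ppos qpos by (simp add: y_def)
  have y2: "y \<ge> 1 - (p + q) * c" using exp_ge_add_one_self[of "- ((p + q) * c)"] by (simp add: y_def)
  have Iq_eq: "Iq = B / A * (Ip * y)"
  proof -
    have "b = A / Ip * exp (p * c) * exp (q * c)" using b_eq by (simp add: m_def a_def)
    moreover have "Iq = B / b" using Iq_pos AB Apos by (simp add: b_def)
    ultimately have "Iq = B / (A / Ip * exp (p * c) * exp (q * c))" by simp
    also have "\<dots> = B / A * (Ip * y)"
    proof -
      have "y * (exp (p * c) * exp (q * c)) = 1" unfolding y_def
        by (simp add: exp_add[symmetric] algebra_simps)
      then have "y = 1 / (exp (p * c) * exp (q * c))" by (simp add: field_simps)
      then show ?thesis using Apos Ip_pos by (simp add: field_simps)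
    qed
    finally show ?thesis .
  qed
  have Ipp: "Ip > 0" by (rule Ip_pos)
  have e1: "Ip * y - K \<le> 3 * p * P" using d1 y1 Ipp by (smt (verit) mult_left_le)
  have f1: "Ip * y \<ge> Ip * (1 - (p + q) * c)" using y2 Ipp by (intro mult_left_mono) auto
  have f2: "Ip * ((p + q) * c) \<le> 3 * K * ((p + q) * c)"
    using Ip3 c0 ppos qpos by (intro mult_right_mono) auto
  have f1': "Ip * y \<ge> Ip - Ip * ((p + q) * c)" using f1 by (simp add: algebra_simps)
  have f2': "Ip * ((p + q) * c) \<le> 3 * (p + q) * P" using f2 by (simp add: P_def algebra_simps)
  have f3: "p * P \<ge> 0" using P0 ppos by simp
  have e2: "Ip * y - K \<ge> - (3 * p * P) - 3 * (p + q) * P"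
    using f1' f2' f3 d2 by linarith
  have absJ: "\<bar>Ip * y - K\<bar> \<le> (6 * p + 3 * q) * P"
  proof -
    have "q * P \<ge> 0" "p * P \<ge> 0" using P0 ppos qpos by simp_all
    then show ?thesis using e1 e2 by (simp add: abs_le_iff algebra_simps)
  qed
  have "\<bar>Iq - B * K / A\<bar> = B / A * \<bar>Ip * y - K\<bar>"
  proof -
    have "B / A * (Ip * y) - B * K / A = B / A * (Ip * y - K)" by (simp add: algebra_simps)
    moreover have "B / A > 0" using Apos AB by simp
    ultimately show ?thesis unfolding Iq_eq using Apos AB by (simp add: abs_mult)
  qed
  also have "\<dots> \<le> B / A * ((6 * p + 3 * q) * P)" using absJ Apos AB by (intro mult_left_mono) auto
  finally have "\<bar>Iq - B * K / A\<bar> \<le> B / A * ((6 * p + 3 * q) * P)" .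
  then show ?thesis using absI unfolding P_def by (simp add: algebra_simps)
qed

end

context sol begin

definition "C6 = 1 + ln (1 + C5) / q + 2 / q"
definition "C4 k = R ^ (N - 1) * (R * (Wmax / lam0) ^ k + 2 * real k) * C6"
definition "Cf k = (3 * p + B / A * (6 * p + 3 * q)) * C4 k"

lemma final:
  assumes ka: "0 < \<kappa>" "\<kappa> < 1" and kk: "\<kappa> \<le> real k * (2 - 2 * \<kappa>)"
    and s1: "\<epsilon> \<le> exp (- 1)" and s2: "\<epsilon>\<^sup>2 / Mc \<le> R / 2"
    and s3: "2 * real k * \<epsilon> powr \<kappa> \<le> R / 2"
    and s4: "p * (C4 k * (\<epsilon> powr \<kappa> * ln (1 / \<epsilon>))) \<le> K"
  shows "\<bar>Ip - K\<bar> + \<bar>Iq - B * K / A\<bar> \<le> Cf k * (\<epsilon> powr \<kappa> * ln (1 / \<epsilon>))"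
proof -
  define l where "l = ln (1 / \<epsilon>)"
  have lneg: "l = - ln \<epsilon>" using eps by (simp add: l_def ln_div)
  have "ln \<epsilon> \<le> ln (exp (- 1))" using s1 eps by (subst ln_le_cancel_iff) auto
  then have l1: "l \<ge> 1" using lneg by simp
  have e1: "\<epsilon> < 1" using s1 exp_less_one_iff[of "-1::real"] by linarith
  define V where "V = c - U R"
  have V0: "V \<ge> 0" using U_le_c[of R] Rpos by (simp add: V_def)
  have C50: "C5 \<ge> 0" by (rule C5_nonneg)
  have VB: "V \<le> C6 * l"
  proof -
    have E: "exp (q * (V - 1)) \<le> 1 + C5 / \<epsilon>\<^sup>2" using Vbound[OF s2] by (simp add: V_def)
    have eps2: "0 < \<epsilon>\<^sup>2" "\<epsilon>\<^sup>2 \<le> 1" using eps e1 by (auto simp: power_le_one)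
    have "1 + C5 / \<epsilon>\<^sup>2 \<le> (1 + C5) / \<epsilon>\<^sup>2"
    proof -
      have "1 \<le> 1 / \<epsilon>\<^sup>2" using eps2 by simp
      then show ?thesis by (simp add: add_divide_distrib)
    qed
    with E have "exp (q * (V - 1)) \<le> (1 + C5) / \<epsilon>\<^sup>2" by linarith
    then have "q * (V - 1) \<le> ln ((1 + C5) / \<epsilon>\<^sup>2)"
      using C50 eps2 by (subst ln_ge_iff) auto
    also have "\<dots> = ln (1 + C5) - 2 * ln \<epsilon>" using C50 eps2 eps
      by (simp add: ln_div ln_realpow)
    also have "\<dots> = ln (1 + C5) + 2 * l" using lneg by simp
    finally have "q * (V - 1) \<le> ln (1 + C5) + 2 * l" .
    then have "V - 1 \<le> (ln (1 + C5) + 2 * l) / q" using qpos by (simp add: pos_le_divide_eq mult.commute)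
    then have "V \<le> 1 + ln (1 + C5) / q + 2 * l / q" by (simp add: add_divide_distrib)
    also have "\<dots> \<le> l + ln (1 + C5) / q * l + 2 * l / q"
    proof -
      have "ln (1 + C5) / q \<ge> 0" using C50 qpos by simp
      then have "ln (1 + C5) / q * 1 \<le> ln (1 + C5) / q * l" using l1 by (intro mult_left_mono)
      then have "ln (1 + C5) / q \<le> ln (1 + C5) / q * l" by simp
      then show ?thesis using l1 by linarith
    qed
    also have "\<dots> = C6 * l" by (simp add: C6_def algebra_simps)
    finally show ?thesis .
  qed
  define L where "L = \<epsilon> powr \<kappa>"
  have L0: "L > 0" using eps by (simp add: L_def)
  have Lk: "R - 2 * real k * L \<ge> R / 2" using s3 by (simp add: L_def)
  have PB: "integral {0..R} (\<lambda>s. s ^ (N - 1) * (c - U s))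
     \<le> R ^ (N - 1) * V * (R * (\<epsilon>\<^sup>2 * Wmax / (lam0 * L\<^sup>2)) ^ k + 2 * real k * L)"
    using Pbound[OF L0 Lk] by (simp add: V_def)
  have th: "\<epsilon>\<^sup>2 * Wmax / (lam0 * L\<^sup>2) = Wmax / lam0 * \<epsilon> powr (2 - 2 * \<kappa>)"
  proof -
    have e2: "\<epsilon>\<^sup>2 = \<epsilon> powr 2" using eps powr_realpow[of \<epsilon> 2] by simp
    have eL: "L\<^sup>2 = \<epsilon> powr (2 * \<kappa>)" unfolding L_def using eps powr_power[of \<epsilon> \<kappa> 2] by simp
    have "\<epsilon> powr (2 - 2 * \<kappa>) = \<epsilon> powr 2 / \<epsilon> powr (2 * \<kappa>)" by (rule powr_diff)
    also have "\<dots> = \<epsilon>\<^sup>2 / L\<^sup>2" by (simp only: e2 eL)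
    finally have q1: "\<epsilon> powr (2 - 2 * \<kappa>) = \<epsilon>\<^sup>2 / L\<^sup>2" .
    have "\<epsilon>\<^sup>2 * Wmax / (lam0 * L\<^sup>2) = Wmax / lam0 * (\<epsilon>\<^sup>2 / L\<^sup>2)"
      using lam0_pos L0 by (simp add: field_simps)
    then show ?thesis unfolding q1 .
  qed
  have thk: "(\<epsilon>\<^sup>2 * Wmax / (lam0 * L\<^sup>2)) ^ k \<le> (Wmax / lam0) ^ k * L"
  proof -
    have "(\<epsilon> powr (2 - 2 * \<kappa>)) ^ k = \<epsilon> powr (real k * (2 - 2 * \<kappa>))"
      using eps powr_power[of \<epsilon> "2 - 2 * \<kappa>" k] by simp
    also have "\<dots> \<le> \<epsilon> powr \<kappa>" using kk eps e1 by (intro powr_mono') auto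
    finally have "(\<epsilon> powr (2 - 2 * \<kappa>)) ^ k \<le> L" by (simp add: L_def)
    moreover have "(Wmax / lam0) ^ k \<ge> 0" using Wmax_pos lam0_pos by simp
    ultimately show ?thesis unfolding th power_mult_distrib by (intro mult_left_mono)
  qed
  have "R * (\<epsilon>\<^sup>2 * Wmax / (lam0 * L\<^sup>2)) ^ k + 2 * real k * L \<le> R * ((Wmax / lam0) ^ k * L) + 2 * real k * L"
    using thk Rpos by simp
  also have "\<dots> = (R * (Wmax / lam0) ^ k + 2 * real k) * L" by (simp add: algebra_simps)
  finally have T: "R * (\<epsilon>\<^sup>2 * Wmax / (lam0 * L\<^sup>2)) ^ k + 2 * real k * L \<le> (R * (Wmax / lam0) ^ k + 2 * real k) * L" .
  have Tn: "0 \<le> R * (\<epsilon>\<^sup>2 * Wmax / (lam0 * L\<^sup>2)) ^ k + 2 * real k * L"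
    using Rpos eps Wmax_pos lam0_pos L0 by simp
  have Rn: "R ^ (N - 1) \<ge> 0" using Rpos by simp
  have "R ^ (N - 1) * V * (R * (\<epsilon>\<^sup>2 * Wmax / (lam0 * L\<^sup>2)) ^ k + 2 * real k * L)
      \<le> R ^ (N - 1) * (C6 * l) * ((R * (Wmax / lam0) ^ k + 2 * real k) * L)"
  proof -
    have a: "R ^ (N - 1) * V \<le> R ^ (N - 1) * (C6 * l)" using VB Rn by (rule mult_left_mono)
    have b: "0 \<le> R ^ (N - 1) * (C6 * l)" using Rn VB V0 by simp
    show ?thesis by (rule mult_mono[OF a T b Tn])
  qed
  also have "\<dots> = C4 k * (\<epsilon> powr \<kappa> * ln (1 / \<epsilon>))" by (simp add: C4_def L_def l_def mult_ac)
  finally have PX: "K * c \<le> C4 k * (\<epsilon> powr \<kappa> * ln (1 / \<epsilon>))" using PB P_eq by linarith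
  have c0: "c \<ge> 0" using P_nonneg P_eq Kpos by (simp add: zero_le_mult_iff)
  have "p * (K * c) \<le> p * (C4 k * (\<epsilon> powr \<kappa> * ln (1 / \<epsilon>)))" using PX ppos by (intro mult_left_mono) auto
  then have "p * (K * c) \<le> K" using s4 by linarith
  then have pc: "p * c \<le> 1" using Kpos by (simp add: mult.left_commute)
  have "\<bar>Ip - K\<bar> + \<bar>Iq - B * K / A\<bar> \<le> (3 * p + B / A * (6 * p + 3 * q)) * (K * c)"
    by (rule est[OF c0 pc])
  also have "\<dots> \<le> (3 * p + B / A * (6 * p + 3 * q)) * (C4 k * (\<epsilon> powr \<kappa> * ln (1 / \<epsilon>)))"
    using PX ppos qpos Apos AB by (intro mult_left_mono) auto
  finally show ?thesis by (simp add: Cf_def mult.assoc)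
qed

end

lemma lim_X: "(\<kappa>::real) > 0 \<Longrightarrow> ((\<lambda>\<epsilon>. \<epsilon> powr \<kappa> * ln (1/\<epsilon>)) \<longlongrightarrow> 0) (at_right 0)"
  by real_asymp

lemma lim_P: "(\<kappa>::real) > 0 \<Longrightarrow> ((\<lambda>\<epsilon>. \<epsilon> powr \<kappa>) \<longlongrightarrow> 0) (at_right 0)"
  by real_asymp

theorem lemma3p9:
  fixes N :: nat and R A B p q :: real and g :: "real \<Rightarrow> real"
  assumes "N \<ge> 2" and "R > 0"
    and "smooth_on {0..R} g" and "\<forall>x\<in>{0..R}. g x > 0"
    and "0 < A" and "A < B" and "p > 0" and "q > 0"
  shows "\<forall>\<kappa>. 0 < \<kappa> \<and> \<kappa> < 1 \<longrightarrow>
    (\<exists>C>0. \<forall>\<^sub>F \<epsilon> in at_right 0. \<forall>U. solves_Nstar N R g A B p q \<epsilon> U \<longrightarrow>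
       \<bar>integral {0..R} (\<lambda>s. s ^ (N - 1) * exp (p * U s)) - R ^ N / real N\<bar>
       + \<bar>integral {0..R} (\<lambda>s. s ^ (N - 1) * exp (- q * U s)) - B * R ^ N / (A * real N)\<bar>
       \<le> C * \<epsilon> powr \<kappa> * ln (1 / \<epsilon>))"
proof (intro allI impI)
  fix \<kappa> :: real assume ka: "0 < \<kappa> \<and> \<kappa> < 1"
  obtain g1 where g1: "\<forall>x\<in>{0..R}. (g has_real_derivative g1 x) (at x within {0..R})"
    using smooth_deriv1[OF assms(3)] by blast
  have gc: "continuous_on {0..R} g" using g1 by (intro DERIV_continuous_on) blast
  obtain x1 where x1: "x1 \<in> {0..R}" "\<And>y. y \<in> {0..R} \<Longrightarrow> g x1 \<le> g y"
    using continuous_attains_inf[OF compact_Icc _ gc] assms(2) by auto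
  obtain x2 where x2: "x2 \<in> {0..R}" "\<And>y. y \<in> {0..R} \<Longrightarrow> g y \<le> g x2"
    using continuous_attains_sup[OF compact_Icc _ gc] assms(2) by auto
  define gmin where "gmin = g x1"
  define gmax where "gmax = g x2"
  have gmin: "gmin > 0" using assms(4) x1 by (simp add: gmin_def)
  have gb: "\<forall>x\<in>{0..R}. gmin \<le> g x \<and> g x \<le> gmax" using x1 x2 by (auto simp: gmin_def gmax_def)
  define k where "k = nat \<lceil>\<kappa> / (2 - 2 * \<kappa>)\<rceil>"
  have kk: "\<kappa> \<le> real k * (2 - 2 * \<kappa>)"
  proof -
    have "\<kappa> / (2 - 2 * \<kappa>) \<le> real k" unfolding k_def by (rule of_nat_ceiling)
    then show ?thesis using ka by (simp add: pos_divide_le_eq)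
  qed
  define Mc0 where "Mc0 = sol.Mc N R A B gmin"
  define C40 where "C40 = sol.C4 N R A B q gmin gmax k"
  define Cf0 where "Cf0 = sol.Cf N R A B p q gmin gmax k"
  define K0 where "K0 = R ^ N / real N"
  have K0: "K0 > 0" using assms(1,2) by (simp add: K0_def)
  have ev1: "\<forall>\<^sub>F \<epsilon> in at_right (0::real). 0 < \<epsilon>" by (rule eventually_at_right_less)
  have ev2: "\<forall>\<^sub>F \<epsilon> in at_right (0::real). \<epsilon> < exp (- 1)"
    by (rule order_tendstoD(2)[OF tendsto_ident_at]) simp
  have ev3: "\<forall>\<^sub>F \<epsilon> in at_right (0::real). \<epsilon>\<^sup>2 / Mc0 < R / 2"
  proof (rule order_tendstoD(2))
    show "((\<lambda>\<epsilon>::real. \<epsilon>\<^sup>2 / Mc0) \<longlongrightarrow> 0) (at_right 0)"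
      using tendsto_divide[OF tendsto_power[OF tendsto_ident_at[of "0::real" "{0<..}"], of 2] tendsto_const[of Mc0]]
      by (cases "Mc0 = 0") auto
    show "0 < R / 2" using assms(2) by simp
  qed
  have ev4: "\<forall>\<^sub>F \<epsilon> in at_right (0::real). 2 * real k * \<epsilon> powr \<kappa> < R / 2"
  proof (rule order_tendstoD(2))
    show "((\<lambda>\<epsilon>::real. 2 * real k * \<epsilon> powr \<kappa>) \<longlongrightarrow> 0) (at_right 0)"
      using tendsto_mult_left[OF lim_P[of \<kappa>], of "2 * real k"] ka by simp
    show "0 < R / 2" using assms(2) by simp
  qed
  have ev5: "\<forall>\<^sub>F \<epsilon> in at_right (0::real). p * (C40 * (\<epsilon> powr \<kappa> * ln (1 / \<epsilon>))) < K0"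
  proof (rule order_tendstoD(2))
    show "((\<lambda>\<epsilon>::real. p * (C40 * (\<epsilon> powr \<kappa> * ln (1 / \<epsilon>)))) \<longlongrightarrow> 0) (at_right 0)"
      using tendsto_mult_left[OF tendsto_mult_left[OF lim_X[of \<kappa>], of C40], of p] ka by simp
    show "0 < K0" by (rule K0)
  qed
  show "\<exists>C>0. \<forall>\<^sub>F \<epsilon> in at_right 0. \<forall>U. solves_Nstar N R g A B p q \<epsilon> U \<longrightarrow>
       \<bar>integral {0..R} (\<lambda>s. s ^ (N - 1) * exp (p * U s)) - R ^ N / real N\<bar>
       + \<bar>integral {0..R} (\<lambda>s. s ^ (N - 1) * exp (- q * U s)) - B * R ^ N / (A * real N)\<bar>
       \<le> C * \<epsilon> powr \<kappa> * ln (1 / \<epsilon>)"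
  proof (intro exI[of _ "max 1 Cf0"] conjI)
    show "0 < max 1 Cf0" by simp
    show "\<forall>\<^sub>F \<epsilon> in at_right 0. \<forall>U. solves_Nstar N R g A B p q \<epsilon> U \<longrightarrow>
       \<bar>integral {0..R} (\<lambda>s. s ^ (N - 1) * exp (p * U s)) - R ^ N / real N\<bar>
       + \<bar>integral {0..R} (\<lambda>s. s ^ (N - 1) * exp (- q * U s)) - B * R ^ N / (A * real N)\<bar>
       \<le> max 1 Cf0 * \<epsilon> powr \<kappa> * ln (1 / \<epsilon>)"
      using ev1 ev2 ev3 ev4 ev5
    proof eventually_elim
      case (elim \<epsilon>)
      show ?case
      proof (intro allI impI)
        fix U assume su: "solves_Nstar N R g A B p q \<epsilon> U"
        obtain U1 U2 where UU: "(\<forall>x\<in>{0..R}. (U has_real_derivative U1 x) (at x within {0..R}))"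
          "continuous_on {0..R} U1" "U1 0 = 0"
          "U1 R = R * (A - B) / (\<epsilon>\<^sup>2 * real N * g R)"
          "\<forall>x\<in>{0<..<R}. (U1 has_real_derivative U2 x) (at x)"
          "integral {0..R} (\<lambda>s. s ^ (N - 1) * U s) = 0"
          "\<forall>r\<in>{0<..<R}.
             \<epsilon>\<^sup>2 * g r * (U2 r + ((real N - 1) / r + g1 r / g r) * U1 r)
             = R ^ N / real N *
               (A * exp (p * U r) / integral {0..R} (\<lambda>s. s ^ (N - 1) * exp (p * U s))
                - B * exp (- q * U r) / integral {0..R} (\<lambda>s. s ^ (N - 1) * exp (- q * U s)))"
          using bridge[OF su g1] by blast
        have S: "sol N R A B p q \<epsilon> gmin gmax g g1 U U1 U2"
          unfolding sol_def using assms elim gmin gb g1 UU by auto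
        have K: "sol.K N R = R ^ N / real N" using sol.K_def[OF S] .
        have fin: "\<bar>sol.Ip N R p U - sol.K N R\<bar> + \<bar>sol.Iq N R q U - B * sol.K N R / A\<bar>
            \<le> Cf0 * (\<epsilon> powr \<kappa> * ln (1 / \<epsilon>))"
          unfolding Cf0_def
          by (rule sol.final[OF S, of \<kappa> k]) (use ka kk elim in \<open>auto simp: Mc0_def C40_def K K0_def\<close>)
        have X0: "0 \<le> \<epsilon> powr \<kappa> * ln (1 / \<epsilon>)"
        proof -
          have "\<epsilon> < 1" using elim exp_less_one_iff[of "-1::real"] by linarith
          then have "ln (1 / \<epsilon>) \<ge> 0" using elim by simp
          then show ?thesis by simp
        qed
        have "Cf0 * (\<epsilon> powr \<kappa> * ln (1 / \<epsilon>)) \<le> max 1 Cf0 * (\<epsilon> powr \<kappa> * ln (1 / \<epsilon>))"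
          using X0 by (intro mult_right_mono) auto
        with fin have F: "\<bar>integral {0..R} (\<lambda>s. s ^ (N - 1) * exp (p * U s)) - R ^ N / real N\<bar>
          + \<bar>integral {0..R} (\<lambda>s. s ^ (N - 1) * exp (- q * U s)) - B * (R ^ N / real N) / A\<bar>
          \<le> max 1 Cf0 * (\<epsilon> powr \<kappa> * ln (1 / \<epsilon>))"
          unfolding sol.Ip_def[OF S] sol.Iq_def[OF S] K by linarith
        have eqB: "B * (R ^ N / real N) / A = B * R ^ N / (A * real N)" by simp
        show "\<bar>integral {0..R} (\<lambda>s. s ^ (N - 1) * exp (p * U s)) - R ^ N / real N\<bar>
          + \<bar>integral {0..R} (\<lambda>s. s ^ (N - 1) * exp (- q * U s)) - B * R ^ N / (A * real N)\<bar>
          \<le> max 1 Cf0 * \<epsilon> powr \<kappa> * ln (1 / \<epsilon>)"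
          using F unfolding eqB by (simp only: mult.assoc)
      qed
    qed
  qed
qed

end
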